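(* For every integer $n \ge 2$ there exists a Sarvate--Beam cube of order $n$, that is, a function $C:[n]^3 \to \mathbb{Z}_{\ge 0}$ (with $[n]=\{1,\dots,n\}$) whose $3n^2$ line sums $$\sum_{i=1}^n C(i,j,k)\ \ (j,k\in[n]),\qquad \sum_{j=1}^n C(i,j,k)\ \ (i,k\in[n]),\qquad \sum_{k=1}^n C(i,j,k)\ \ (i,j\in[n])$$ are, as a multiset, exactly the integers $0,1,2,\dots,3n^2-1$ (each occurring once).
   Context: A line of an $n\times n\times n$ cube is a set of $n$ positions obtained by fixing two of the three coordinates and letting the third range over $[n]$; a line sum is the sum of the entries over a line. There are $3n^2$ lines. *)

theory Defs
  imports Main "HOL-Library.Multiset"
begin

definition line_sums :: "nat \<Rightarrow> (nat \<Rightarrow> nat \<Rightarrow> nat \<Rightarrow> nat) \<Rightarrow> nat multiset" where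
  "line_sums n C =
     image_mset (\<lambda>(j,k). \<Sum>i\<in>{1..n}. C i j k) (mset_set ({1..n} \<times> {1..n}))
   + image_mset (\<lambda>(i,k). \<Sum>j\<in>{1..n}. C i j k) (mset_set ({1..n} \<times> {1..n}))
   + image_mset (\<lambda>(i,j). \<Sum>k\<in>{1..n}. C i j k) (mset_set ({1..n} \<times> {1..n}))"

definition sarvate_beam_cube :: "nat \<Rightarrow> (nat \<Rightarrow> nat \<Rightarrow> nat \<Rightarrow> nat) \<Rightarrow> bool" where
  "sarvate_beam_cube n C \<longleftrightarrow> line_sums n C = mset_set {0..<3 * n^2}"

end

theory Submission
  imports Defs
begin





definition md :: "nat \<Rightarrow> int \<Rightarrow> nat" where
  "md n x = nat (x mod int n)"

lemma md_lt: "0 < n \<Longrightarrow> md n x < n"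
  unfolding md_def by (simp add: nat_less_iff)

lemma int_md: "0 < n \<Longrightarrow> int (md n x) = x mod int n"
  unfolding md_def by simp

lemma md_of_nat: "a < n \<Longrightarrow> md n (int a) = a"
  unfolding md_def by (simp add: nat_mod_distrib)

lemma md_cong: "x mod int n = y mod int n \<Longrightarrow> md n x = md n y"
  unfolding md_def by simp

lemma md_iff:
  assumes "a < n" "c < n"
  shows "(c = md n (int a + e)) \<longleftrightarrow> (a = md n (int c - e))"
proof -
  have n: "0 < n" using assms by simp
  have "(c = md n (int a + e)) \<longleftrightarrow> int c = (int a + e) mod int n"
    using int_md[OF n] by (metis of_nat_eq_iff)
  also have "\<dots> \<longleftrightarrow> (int c) mod int n = (int a + e) mod int n"
    using assms by simp
  also have "\<dots> \<longleftrightarrow> (int c - e) mod int n = (int a) mod int n"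
    by (metis add_diff_cancel_right' diff_add_cancel mod_diff_left_eq mod_add_left_eq)
  also have "\<dots> \<longleftrightarrow> (int c - e) mod int n = int a"
    using assms by simp
  also have "\<dots> \<longleftrightarrow> a = md n (int c - e)"
    using int_md[OF n] by (metis of_nat_eq_iff)
  finally show ?thesis .
qed



definition perm3 :: "nat \<Rightarrow> nat \<Rightarrow> nat \<Rightarrow> bool" where
  "perm3 a b c \<longleftrightarrow> a \<le> 2 \<and> b \<le> 2 \<and> c \<le> 2 \<and> a \<noteq> b \<and> b \<noteq> c \<and> a \<noteq> c"

type_synonym layers = "(nat \<times> (nat \<Rightarrow> nat)) list"

definition Zc :: "nat \<Rightarrow> layers \<Rightarrow> nat \<Rightarrow> nat" where
  "Zc n L d = sum_list (map (\<lambda>(t,g). g d) L)"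
definition Xc :: "nat \<Rightarrow> layers \<Rightarrow> nat \<Rightarrow> nat" where
  "Xc n L d = sum_list (map (\<lambda>(t,g). g (md n (int d - int t))) L)"
definition Yc :: "nat \<Rightarrow> layers \<Rightarrow> nat \<Rightarrow> nat" where
  "Yc n L d = sum_list (map (\<lambda>(t,g). g (md n (int d + int t))) L)"

definition good :: "nat \<Rightarrow> layers \<Rightarrow> bool" where
  "good n L \<longleftrightarrow> (\<forall>d<n. perm3 (Zc n L d) (Xc n L d) (Yc n L d))"

definition C0 :: "nat \<Rightarrow> layers \<Rightarrow> nat \<Rightarrow> nat \<Rightarrow> nat \<Rightarrow> nat" where
  "C0 n L a b c = (if c = md n (int a + int b) then n*a + b else 0)
     + n^2 * sum_list (map (\<lambda>(t,g). if c = md n (int a + int b + int t) then g (md n (int a - int b)) else 0) L)"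

lemma sum_layers:
  assumes "\<And>t g. (t,g) \<in> set L \<Longrightarrow> (\<Sum>x\<in>A. F t g x) = H t g"
  shows "(\<Sum>x\<in>A. sum_list (map (\<lambda>(t,g). F t g x) L)) = sum_list (map (\<lambda>(t,g). H t g) L)"
  using assms
proof (induction L)
  case Nil
  show ?case by simp
next
  case (Cons x L)
  obtain t g where x: "x = (t,g)" by force
  have h: "(\<Sum>x\<in>A. F t g x) = H t g" using Cons.prems x by simp
  have IH: "(\<Sum>x\<in>A. sum_list (map (\<lambda>(t,g). F t g x) L)) = sum_list (map (\<lambda>(t,g). H t g) L)"
    using Cons.IH Cons.prems by simp
  show ?case using h IH by (simp add: x sum.distrib)
qed

lemma sum_if_unique:
  fixes a0 n :: nat
  assumes "a0 < n" "P a0" "\<And>a. a < n \<Longrightarrow> P a \<Longrightarrow> a = a0"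
  shows "(\<Sum>a<n. if P a then h a else 0) = (h a0 :: nat)"
proof -
  have eq: "(if P a then h a else 0) = (if a = a0 then h a0 else 0)" if "a \<in> {..<n}" for a
  proof (cases "P a")
    case True
    then have "a = a0" using assms(3) that by blast
    then show ?thesis using True by simp
  next
    case False
    then have "a \<noteq> a0" using assms(2) by blast
    then show ?thesis using False by simp
  qed
  have "(\<Sum>a<n. if P a then h a else 0) = (\<Sum>a<n. if a = a0 then h a0 else 0)"
    using eq by (rule sum.cong[OF refl])
  also have "\<dots> = h a0" using assms(1) by (simp add: sum.delta sum.delta')
  finally show ?thesis .
qed

lemma lineZ:
  assumes "a < n" "b < n"
  shows "(\<Sum>c<n. C0 n L a b c) = n*a + b + n^2 * Zc n L (md n (int a - int b))"
proof -
  have n: "0 < n" using assms by simp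
  have 1: "(\<Sum>c<n. if c = md n (int a + int b) then n*a + b else 0) = n*a + b"
    using md_lt[OF n] by simp
  have 2: "(\<Sum>c<n. sum_list (map (\<lambda>(t,g). if c = md n (int a + int b + int t) then g (md n (int a - int b)) else 0) L))
      = sum_list (map (\<lambda>(t,g). g (md n (int a - int b))) L)"
    by (rule sum_layers) (use md_lt[OF n] in simp)
  show ?thesis
    unfolding C0_def sum.distrib 1 sum_distrib_left[symmetric] 2 Zc_def by simp
qed

lemma lineX:
  assumes "b < n" "c < n"
  defines "a0 \<equiv> md n (int c - int b)"
  shows "(\<Sum>a<n. C0 n L a b c) = n*a0 + b + n^2 * Xc n L (md n (int a0 - int b))"
proof -
  have n: "0 < n" using assms by simp
  have a0: "a0 < n" unfolding a0_def using md_lt[OF n] .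
  have 1: "(\<Sum>a<n. if c = md n (int a + int b) then n*a + b else 0) = n*a0 + b"
    by (rule sum_if_unique[OF a0]) (use assms md_iff[of _ n c] a0 in auto)
  have 2: "(\<Sum>a<n. sum_list (map (\<lambda>(t,g). if c = md n (int a + int b + int t) then g (md n (int a - int b)) else 0) L))
      = sum_list (map (\<lambda>(t,g). g (md n (int (md n (int a0 - int b)) - int t))) L)"
  proof (rule sum_layers)
    fix t :: nat and g :: "nat \<Rightarrow> nat"
    define at where "at = md n (int c - (int b + int t))"
    have at: "at < n" unfolding at_def using md_lt[OF n] .
    have "(\<Sum>a<n. if c = md n (int a + int b + int t) then g (md n (int a - int b)) else 0) = g (md n (int at - int b))"
      by (rule sum_if_unique[OF at]) (use assms md_iff[of _ n c "int b + int t"] at at_def in \<open>auto simp: add.assoc\<close>)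
    also have "md n (int at - int b) = md n (int (md n (int a0 - int b)) - int t)"
      unfolding at_def a0_def by (rule md_cong) (simp add: int_md[OF n] mod_simps algebra_simps)
    finally show "(\<Sum>a<n. if c = md n (int a + int b + int t) then g (md n (int a - int b)) else 0) = g (md n (int (md n (int a0 - int b)) - int t))" .
  qed
  show ?thesis
    unfolding C0_def sum.distrib 1 sum_distrib_left[symmetric] 2 Xc_def by simp
qed

lemma lineY:
  assumes "a < n" "c < n"
  defines "b0 \<equiv> md n (int c - int a)"
  shows "(\<Sum>b<n. C0 n L a b c) = n*a + b0 + n^2 * Yc n L (md n (int a - int b0))"
proof -
  have n: "0 < n" using assms by simp
  have b0: "b0 < n" unfolding b0_def using md_lt[OF n] .
  have 1: "(\<Sum>b<n. if c = md n (int a + int b) then n*a + b else 0) = n*a + b0"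
  proof (rule sum_if_unique[OF b0])
    show "c = md n (int a + int b0)"
      using md_iff[of b0 n c "int a"] b0 assms by (simp add: b0_def add.commute)
    fix b assume "b < n" "c = md n (int a + int b)"
    then show "b = b0" using md_iff[of b n c "int a"] assms by (simp add: b0_def add.commute)
  qed
  have 2: "(\<Sum>b<n. sum_list (map (\<lambda>(t,g). if c = md n (int a + int b + int t) then g (md n (int a - int b)) else 0) L))
      = sum_list (map (\<lambda>(t,g). g (md n (int (md n (int a - int b0)) + int t))) L)"
  proof (rule sum_layers)
    fix t :: nat and g :: "nat \<Rightarrow> nat"
    define bt where "bt = md n (int c - (int a + int t))"
    have bt: "bt < n" unfolding bt_def using md_lt[OF n] .
    have "(\<Sum>b<n. if c = md n (int a + int b + int t) then g (md n (int a - int b)) else 0) = g (md n (int a - int bt))"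
    proof (rule sum_if_unique[OF bt])
      show "c = md n (int a + int bt + int t)"
        using md_iff[of bt n c "int a + int t"] bt assms by (simp add: bt_def algebra_simps)
      fix b assume "b < n" "c = md n (int a + int b + int t)"
      then show "b = bt" using md_iff[of b n c "int a + int t"] assms by (simp add: bt_def algebra_simps)
    qed
    also have "md n (int a - int bt) = md n (int (md n (int a - int b0)) + int t)"
      unfolding bt_def b0_def by (rule md_cong) (simp add: int_md[OF n] mod_simps algebra_simps)
    finally show "(\<Sum>b<n. if c = md n (int a + int b + int t) then g (md n (int a - int b)) else 0) = g (md n (int (md n (int a - int b0)) + int t))" .
  qed
  show ?thesis
    unfolding C0_def sum.distrib 1 sum_distrib_left[symmetric] 2 Yc_def by simp
qed


definition Cube :: "nat \<Rightarrow> layers \<Rightarrow> nat \<Rightarrow> nat \<Rightarrow> nat \<Rightarrow> nat" where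
  "Cube n L i j k = C0 n L (i - 1) (j - 1) (k - 1)"

lemma shift_sum:
  fixes n :: nat and f :: "nat \<Rightarrow> nat"
  shows "(\<Sum>i\<in>{1..n}. f (i - 1)) = (\<Sum>a<n. f a)"
  using sum.atLeast1_atMost_eq[of "\<lambda>i. f (i - 1)" n] by simp

lemma val_inj:
  fixes n a b a' b' r r' :: nat
  assumes "a < n" "b < n" "a' < n" "b' < n"
    and eq: "n*a + b + n^2 * r = n*a' + b' + n^2 * r'"
  shows "a = a' \<and> b = b' \<and> r = r'"
proof -
  have n: "0 < n" using assms by simp
  have lt: "n*a + b < n^2" "n*a' + b' < n^2"
  proof -
    have "n*a + b < n*a + n" using assms by simp
    also have "\<dots> = n * (a + 1)" by simp
    also have "\<dots> \<le> n * n" using assms by (intro mult_le_mono2) simp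
    finally show "n*a + b < n^2" by (simp add: power2_eq_square)
    have "n*a' + b' < n*a' + n" using assms by simp
    also have "\<dots> = n * (a' + 1)" by simp
    also have "\<dots> \<le> n * n" using assms by (intro mult_le_mono2) simp
    finally show "n*a' + b' < n^2" by (simp add: power2_eq_square)
  qed
  have m: "n*a + b = n*a' + b'"
  proof -
    have "(n*a + b + n^2 * r) mod n^2 = n*a + b" using lt by simp
    moreover have "(n*a' + b' + n^2 * r') mod n^2 = n*a' + b'" using lt by simp
    ultimately show ?thesis using eq by simp
  qed
  have rr: "r = r'"
  proof -
    have "(n*a + b + n^2 * r) div n^2 = r" using lt n by simp
    moreover have "(n*a' + b' + n^2 * r') div n^2 = r'" using lt n by simp
    ultimately show ?thesis using eq by simp
  qed
  have "b = b'"
  proof -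
    have "(n*a + b) mod n = b" "(n*a' + b') mod n = b'" using assms by simp_all
    then show ?thesis using m by metis
  qed
  moreover have "a = a'"
  proof -
    have "(n*a + b) div n = a" "(n*a' + b') div n = a'" using assms by simp_all
    then show ?thesis using m by metis
  qed
  ultimately show ?thesis using rr by simp
qed

lemma val_bound:
  fixes n a b r :: nat
  assumes "a < n" "b < n" "r \<le> 2"
  shows "n*a + b + n^2 * r < 3 * n^2"
proof -
  have "n*a + b < n*a + n" using assms by simp
  also have "\<dots> = n * (a + 1)" by simp
  also have "\<dots> \<le> n * n" using assms by (intro mult_le_mono2) simp
  finally have "n*a + b < n^2" by (simp add: power2_eq_square)
  moreover have "n^2 * r \<le> n^2 * 2" using assms by simp
  ultimately show ?thesis by linarith
qed

lemma md_cancel: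
  assumes "c < n" "c' < n" "md n (int c - e) = md n (int c' - e)"
  shows "c = c'"
proof -
  have n: "0 < n" using assms by simp
  have "(int c - e) mod int n = (int c' - e) mod int n"
    using assms(3) int_md[OF n] by metis
  then have "((int c - e) + e) mod int n = ((int c' - e) + e) mod int n"
    by (metis mod_add_left_eq)
  then have "int c mod int n = int c' mod int n" by simp
  then show ?thesis using assms(1,2) by simp
qed

lemma good_cube:
  assumes n: "0 < n" and G: "good n L"
  shows "line_sums n (Cube n L) = mset_set {0..<3*n^2}"
proof -
  define A where "A = {1..n} \<times> {1..n}"
  define dd where "dd a b = md n (int a - int b)" for a b
  define fX where "fX = (\<lambda>(j,k). \<Sum>i\<in>{1..n}. Cube n L i j k)"
  define fY where "fY = (\<lambda>(i,k). \<Sum>j\<in>{1..n}. Cube n L i j k)"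
  define fZ where "fZ = (\<lambda>(i,j). \<Sum>k\<in>{1..n}. Cube n L i j k)"
  define aX where "aX j k = md n (int (k - 1) - int (j - 1))" for j k
  define bY where "bY i k = md n (int (k - 1) - int (i - 1))" for i k
  have dd_lt: "dd a b < n" for a b unfolding dd_def using md_lt[OF n] .
  have aX_lt: "aX j k < n" for j k unfolding aX_def using md_lt[OF n] .
  have bY_lt: "bY i k < n" for i k unfolding bY_def using md_lt[OF n] .
  have GG: "perm3 (Zc n L d) (Xc n L d) (Yc n L d)" if "d < n" for d
    using G that unfolding good_def by blast
  have fZ: "fZ (i,j) = n*(i-1) + (j-1) + n^2 * Zc n L (dd (i-1) (j-1))" if "(i,j) \<in> A" for i j
  proof -
    have "fZ (i,j) = (\<Sum>c<n. C0 n L (i-1) (j-1) c)"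
      unfolding fZ_def Cube_def using shift_sum[of "\<lambda>c. C0 n L (i-1) (j-1) c" n] by simp
    also have "\<dots> = n*(i-1) + (j-1) + n^2 * Zc n L (dd (i-1) (j-1))"
      using that unfolding A_def dd_def by (intro lineZ) auto
    finally show ?thesis .
  qed
  have fX: "fX (j,k) = n*(aX j k) + (j-1) + n^2 * Xc n L (dd (aX j k) (j-1))" if "(j,k) \<in> A" for j k
  proof -
    have "fX (j,k) = (\<Sum>a<n. C0 n L a (j-1) (k-1))"
      unfolding fX_def Cube_def using shift_sum[of "\<lambda>a. C0 n L a (j-1) (k-1)" n] by simp
    also have "\<dots> = n*(aX j k) + (j-1) + n^2 * Xc n L (dd (aX j k) (j-1))"
      using that unfolding A_def dd_def aX_def by (intro lineX) auto
    finally show ?thesis .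
  qed
  have fY: "fY (i,k) = n*(i-1) + bY i k + n^2 * Yc n L (dd (i-1) (bY i k))" if "(i,k) \<in> A" for i k
  proof -
    have "fY (i,k) = (\<Sum>b<n. C0 n L (i-1) b (k-1))"
      unfolding fY_def Cube_def using shift_sum[of "\<lambda>b. C0 n L (i-1) b (k-1)" n] by simp
    also have "\<dots> = n*(i-1) + bY i k + n^2 * Yc n L (dd (i-1) (bY i k))"
      using that unfolding A_def dd_def bY_def by (intro lineY) auto
    finally show ?thesis .
  qed
  have injZ: "inj_on fZ A"
  proof (rule inj_onI)
    fix x y assume x: "x \<in> A" and y: "y \<in> A" and e: "fZ x = fZ y"
    obtain i j where xi: "x = (i,j)" by force
    obtain i' j' where yi: "y = (i',j')" by force
    have r: "1 \<le> i" "i \<le> n" "1 \<le> j" "j \<le> n" "1 \<le> i'" "i' \<le> n" "1 \<le> j'" "j' \<le> n"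
      using x y unfolding xi yi A_def by auto
    have e': "n*(i-1) + (j-1) + n^2 * Zc n L (dd (i-1) (j-1)) = n*(i'-1) + (j'-1) + n^2 * Zc n L (dd (i'-1) (j'-1))"
      using e fZ[of i j] fZ[of i' j'] x y unfolding xi yi by simp
    have "i - 1 = i' - 1 \<and> j - 1 = j' - 1"
      using val_inj[OF _ _ _ _ e'] r by linarith
    then have "i = i'" "j = j'" using r by arith+
    then show "x = y" unfolding xi yi by simp
  qed
  have injX: "inj_on fX A"
  proof (rule inj_onI)
    fix x y assume x: "x \<in> A" and y: "y \<in> A" and e: "fX x = fX y"
    obtain j k where xi: "x = (j,k)" by force
    obtain j' k' where yi: "y = (j',k')" by force
    have r: "1 \<le> j" "j \<le> n" "1 \<le> k" "k \<le> n" "1 \<le> j'" "j' \<le> n" "1 \<le> k'" "k' \<le> n"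
      using x y unfolding xi yi A_def by auto
    have e': "n*(aX j k) + (j-1) + n^2 * Xc n L (dd (aX j k) (j-1)) = n*(aX j' k') + (j'-1) + n^2 * Xc n L (dd (aX j' k') (j'-1))"
      using e fX[of j k] fX[of j' k'] x y unfolding xi yi by simp
    have "aX j k = aX j' k' \<and> j - 1 = j' - 1"
      using val_inj[OF aX_lt _ aX_lt _ e'] r by linarith
    then have jj: "j = j'" and eqa: "aX j k = aX j' k'" using r by arith+
    have eqm: "md n (int (k-1) - int (j-1)) = md n (int (k'-1) - int (j-1))"
      using eqa jj unfolding aX_def by simp
    have "k - 1 < n" "k' - 1 < n" using r by linarith+
    then have "k - 1 = k' - 1" using md_cancel eqm by blast
    then have "k = k'" using r by arith
    then show "x = y" using jj unfolding xi yi by simp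
  qed
  have injY: "inj_on fY A"
  proof (rule inj_onI)
    fix x y assume x: "x \<in> A" and y: "y \<in> A" and e: "fY x = fY y"
    obtain i k where xi: "x = (i,k)" by force
    obtain i' k' where yi: "y = (i',k')" by force
    have r: "1 \<le> i" "i \<le> n" "1 \<le> k" "k \<le> n" "1 \<le> i'" "i' \<le> n" "1 \<le> k'" "k' \<le> n"
      using x y unfolding xi yi A_def by auto
    have e': "n*(i-1) + bY i k + n^2 * Yc n L (dd (i-1) (bY i k)) = n*(i'-1) + bY i' k' + n^2 * Yc n L (dd (i'-1) (bY i' k'))"
      using e fY[of i k] fY[of i' k'] x y unfolding xi yi by simp
    have "i - 1 = i' - 1 \<and> bY i k = bY i' k'"
      using val_inj[OF _ bY_lt _ bY_lt e'] r by linarith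
    then have ii: "i = i'" and eqb: "bY i k = bY i' k'" using r by arith+
    have eqm: "md n (int (k-1) - int (i-1)) = md n (int (k'-1) - int (i-1))"
      using eqb ii unfolding bY_def by simp
    have "k - 1 < n" "k' - 1 < n" using r by linarith+
    then have "k - 1 = k' - 1" using md_cancel eqm by blast
    then have "k = k'" using r by arith
    then show "x = y" using ii unfolding xi yi by simp
  qed
  have dXZ: "fX ` A \<inter> fZ ` A = {}"
  proof (rule ccontr)
    assume "fX ` A \<inter> fZ ` A \<noteq> {}"
    then obtain j k i j' where x: "(j,k) \<in> A" and y: "(i,j') \<in> A" and e: "fX (j,k) = fZ (i,j')" by auto
    have r: "j - 1 < n" "i - 1 < n" "j' - 1 < n" using x y unfolding A_def by auto
    have e': "n*(aX j k) + (j-1) + n^2 * Xc n L (dd (aX j k) (j-1)) = n*(i-1) + (j'-1) + n^2 * Zc n L (dd (i-1) (j'-1))"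
      using e fX[OF x] fZ[OF y] by simp
    have "aX j k = i - 1 \<and> j - 1 = j' - 1 \<and> Xc n L (dd (aX j k) (j-1)) = Zc n L (dd (i-1) (j'-1))"
      by (rule val_inj[OF aX_lt r(1) r(2) r(3) e'])
    then have E1: "aX j k = i - 1" and E2: "j - 1 = j' - 1" and E3: "Xc n L (dd (aX j k) (j-1)) = Zc n L (dd (i-1) (j'-1))" by auto
    have "Xc n L (dd (aX j k) (j-1)) = Zc n L (dd (aX j k) (j-1))" using E3 unfolding E1 E2 by simp
    then show False using GG[OF dd_lt[of "aX j k" "j-1"]] unfolding perm3_def by simp
  qed
  have dYZ: "fY ` A \<inter> fZ ` A = {}"
  proof (rule ccontr)
    assume "fY ` A \<inter> fZ ` A \<noteq> {}"
    then obtain i k i' j' where x: "(i,k) \<in> A" and y: "(i',j') \<in> A" and e: "fY (i,k) = fZ (i',j')" by auto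
    have r: "i - 1 < n" "i' - 1 < n" "j' - 1 < n" using x y unfolding A_def by auto
    have e': "n*(i-1) + bY i k + n^2 * Yc n L (dd (i-1) (bY i k)) = n*(i'-1) + (j'-1) + n^2 * Zc n L (dd (i'-1) (j'-1))"
      using e fY[OF x] fZ[OF y] by simp
    have "i - 1 = i' - 1 \<and> bY i k = j' - 1 \<and> Yc n L (dd (i-1) (bY i k)) = Zc n L (dd (i'-1) (j'-1))"
      by (rule val_inj[OF r(1) bY_lt r(2) r(3) e'])
    then have E1: "i - 1 = i' - 1" and E2: "bY i k = j' - 1" and E3: "Yc n L (dd (i-1) (bY i k)) = Zc n L (dd (i'-1) (j'-1))" by auto
    have "Yc n L (dd (i-1) (bY i k)) = Zc n L (dd (i-1) (bY i k))" using E3 unfolding E1 E2 by simp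
    then show False using GG[OF dd_lt[of "i-1" "bY i k"]] unfolding perm3_def by simp
  qed
  have dXY: "fX ` A \<inter> fY ` A = {}"
  proof (rule ccontr)
    assume "fX ` A \<inter> fY ` A \<noteq> {}"
    then obtain j k i k' where x: "(j,k) \<in> A" and y: "(i,k') \<in> A" and e: "fX (j,k) = fY (i,k')" by auto
    have r: "j - 1 < n" "i - 1 < n" using x y unfolding A_def by auto
    have e': "n*(aX j k) + (j-1) + n^2 * Xc n L (dd (aX j k) (j-1)) = n*(i-1) + bY i k' + n^2 * Yc n L (dd (i-1) (bY i k'))"
      using e fX[OF x] fY[OF y] by simp
    have "aX j k = i - 1 \<and> j - 1 = bY i k' \<and> Xc n L (dd (aX j k) (j-1)) = Yc n L (dd (i-1) (bY i k'))"
      by (rule val_inj[OF aX_lt r(1) r(2) bY_lt e'])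
    then have E1: "aX j k = i - 1" and E2: "j - 1 = bY i k'" and E3: "Xc n L (dd (aX j k) (j-1)) = Yc n L (dd (i-1) (bY i k'))" by auto
    have "Xc n L (dd (aX j k) (j-1)) = Yc n L (dd (aX j k) (j-1))" using E3 unfolding E1 E2 by simp
    then show False using GG[OF dd_lt[of "aX j k" "j-1"]] unfolding perm3_def by simp
  qed
  have finA: "finite A" unfolding A_def by simp
  have cardA: "card A = n^2" unfolding A_def by (simp add: power2_eq_square)
  have sub: "fX ` A \<union> fY ` A \<union> fZ ` A \<subseteq> {0..<3*n^2}"
  proof -
    have "fX x < 3*n^2" if "x \<in> A" for x
    proof -
      obtain j k where xi: "x = (j,k)" by force
      have r: "j - 1 < n" using that unfolding xi A_def by auto
      have "Xc n L (dd (aX j k) (j-1)) \<le> 2" using GG[OF dd_lt[of "aX j k" "j-1"]] unfolding perm3_def by simp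
      from val_bound[OF aX_lt r this] show ?thesis using fX[of j k] that unfolding xi by simp
    qed
    moreover have "fY x < 3*n^2" if "x \<in> A" for x
    proof -
      obtain i k where xi: "x = (i,k)" by force
      have r: "i - 1 < n" using that unfolding xi A_def by auto
      have "Yc n L (dd (i-1) (bY i k)) \<le> 2" using GG[OF dd_lt[of "i-1" "bY i k"]] unfolding perm3_def by simp
      from val_bound[OF r bY_lt this] show ?thesis using fY[of i k] that unfolding xi by simp
    qed
    moreover have "fZ x < 3*n^2" if "x \<in> A" for x
    proof -
      obtain i j where xi: "x = (i,j)" by force
      have r: "i - 1 < n" "j - 1 < n" using that unfolding xi A_def by auto
      have "Zc n L (dd (i-1) (j-1)) \<le> 2" using GG[OF dd_lt[of "i-1" "j-1"]] unfolding perm3_def by simp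
      from val_bound[OF r this] show ?thesis using fZ[of i j] that unfolding xi by simp
    qed
    ultimately show ?thesis by fastforce
  qed
  have card: "card (fX ` A \<union> fY ` A \<union> fZ ` A) = 3*n^2"
  proof -
    have "card (fX ` A \<union> fY ` A \<union> fZ ` A) = card (fX ` A \<union> fY ` A) + card (fZ ` A)"
      using dXZ dYZ finA by (intro card_Un_disjoint) auto
    also have "card (fX ` A \<union> fY ` A) = card (fX ` A) + card (fY ` A)"
      using dXY finA by (intro card_Un_disjoint) auto
    finally show ?thesis using card_image[OF injX] card_image[OF injY] card_image[OF injZ] cardA by simp
  qed
  have U: "fX ` A \<union> fY ` A \<union> fZ ` A = {0..<3*n^2}"
    using card sub by (intro card_subset_eq) auto
  have "line_sums n (Cube n L) = image_mset fX (mset_set A) + image_mset fY (mset_set A) + image_mset fZ (mset_set A)"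
    unfolding line_sums_def fX_def fY_def fZ_def A_def by simp
  also have "\<dots> = mset_set (fX ` A) + mset_set (fY ` A) + mset_set (fZ ` A)"
    using image_mset_mset_set[OF injX] image_mset_mset_set[OF injY] image_mset_mset_set[OF injZ] by simp
  also have "\<dots> = mset_set (fX ` A \<union> fY ` A \<union> fZ ` A)"
    using dXY dXZ dYZ finA by (simp add: mset_set_Union Int_Un_distrib2)
  finally show ?thesis using U by simp
qed


definition pat :: "nat \<Rightarrow> nat \<Rightarrow> nat \<Rightarrow> nat \<Rightarrow> nat" where
  "pat p0 p1 p2 x = (if x mod 3 = 0 then p0 else if x mod 3 = 1 then p1 else p2)"

definition pt :: "nat \<Rightarrow> nat \<Rightarrow> nat" where
  "pt s x = (if x = s then 1 else 0)"

lemma md_sub: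
  assumes "d < n" "t \<le> n"
  shows "md n (int d - int t) = (if t \<le> d then d - t else d + n - t)"
proof (cases "t \<le> d")
  case True
  then have "md n (int d - int t) = md n (int (d - t))" by (simp add: of_nat_diff)
  moreover have "d - t < n" using assms by simp
  ultimately show ?thesis using True md_of_nat[of "d - t" n] by (simp add: of_nat_diff)
next
  case False
  then have "(int d - int t) mod int n = (int (d + n - t) - int n) mod int n" using assms by simp
  also have "\<dots> = int (d + n - t) mod int n" by (simp add: mod_diff_right_eq[symmetric])
  finally have "md n (int d - int t) = md n (int (d + n - t))" by (rule md_cong)
  moreover have "d + n - t < n" using False assms by simp
  ultimately show ?thesis using False md_of_nat by simp
qed

lemma md_add:
  assumes "d < n" "t \<le> n"
  shows "md n (int d + int t) = (if d + t < n then d + t else d + t - n)"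
proof (cases "d + t < n")
  case True
  then show ?thesis using md_of_nat[OF True] by simp
next
  case False
  then have "(int d + int t) mod int n = (int (d + t - n) + int n) mod int n" using assms by simp
  also have "\<dots> = int (d + t - n) mod int n" by simp
  finally have "md n (int d + int t) = md n (int (d + t - n))" by (rule md_cong)
  moreover have "d + t - n < n" using False assms by simp
  ultimately show ?thesis using False md_of_nat[of "d + t - n" n] by simp
qed

lemma pat3:
  assumes "p0 \<le> 2" "p1 \<le> 2" "p2 \<le> 2" "p0 \<noteq> p1" "p1 \<noteq> p2" "p0 \<noteq> p2"
  shows "pat p0 p1 p2 x \<le> 2 \<and> pat p0 p1 p2 (x+1) \<le> 2 \<and> pat p0 p1 p2 (x+2) \<le> 2 \<and>
    pat p0 p1 p2 x \<noteq> pat p0 p1 p2 (x+1) \<and> pat p0 p1 p2 (x+1) \<noteq> pat p0 p1 p2 (x+2) \<and>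
    pat p0 p1 p2 x \<noteq> pat p0 p1 p2 (x+2)"
proof -
  have "x mod 3 = 0 \<or> x mod 3 = 1 \<or> x mod 3 = 2" by presburger
  moreover have "(x+1) mod 3 = (x mod 3 + 1) mod 3" "(x+2) mod 3 = (x mod 3 + 2) mod 3"
    by presburger+
  ultimately show ?thesis using assms unfolding pat_def by auto
qed

lemma interior:
  assumes v: "p0 \<le> 2" "p1 \<le> 2" "p2 \<le> 2" "p0 \<noteq> p1" "p1 \<noteq> p2" "p0 \<noteq> p2"
    and "Z = pat p0 p1 p2 (x + 1)" "X = pat p0 p1 p2 x" "Y = pat p0 p1 p2 (x + 2)"
  shows "perm3 Z X Y"
  using pat3[OF v, of x] assms(7-9) unfolding perm3_def by auto

lemma m3 [simp]: "(3*m) mod 3 = (0::nat)" "Suc (3*m) mod 3 = 1" "Suc (Suc (3*m)) mod 3 = 2"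
  by presburger+

definition L0 :: "layers" where "L0 = [(1, pat 1 2 0)]"

lemma good0: "good (3*m+3) L0"
  unfolding good_def
proof (intro allI impI)
  fix d assume d: "d < 3*m+3"
  let ?n = "3*m+3"
  have Z: "Zc ?n L0 d = pat 1 2 0 d" unfolding Zc_def L0_def by simp
  have X: "Xc ?n L0 d = pat 1 2 0 (if 1 \<le> d then d - 1 else d + ?n - 1)"
    unfolding Xc_def L0_def using md_sub[OF d, of 1] by simp
  have Y: "Yc ?n L0 d = pat 1 2 0 (if d + 1 < ?n then d + 1 else d + 1 - ?n)"
    unfolding Yc_def L0_def using md_add[OF d, of 1] by simp
  consider "d = 0" | "d = 3*m+2" | "0 < d \<and> d < 3*m+2" using d by linarith
  then show "perm3 (Zc ?n L0 d) (Xc ?n L0 d) (Yc ?n L0 d)"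
  proof cases
    case 1
    then show ?thesis unfolding Z X Y by (simp add: pat_def perm3_def)
  next
    case 2
    then show ?thesis unfolding Z X Y by (simp add: pat_def perm3_def)
  next
    case 3
    then show ?thesis unfolding Z X Y by (intro interior[of 1 2 0 _ "d - 1"]) auto
  qed
qed




lemma pat_plus3 [simp]: "pat p0 p1 p2 (x + 3) = pat p0 p1 p2 x" "pat p0 p1 p2 (Suc (Suc (Suc x))) = pat p0 p1 p2 x"
  unfolding pat_def by presburger+

lemma interior2:
  assumes v: "pa \<le> 2" "pb \<le> 2" "pc \<le> 2" "pa \<noteq> pb" "pb \<noteq> pc" "pa \<noteq> pc"
    and "Z = pat pa pb pc z" "X = pat pa pb pc x" "Y = pat pa pb pc y"
    and "z mod 3 = (x + 1) mod 3" "y mod 3 = (x + 2) mod 3"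
  shows "perm3 Z X Y"
proof -
  have "pat pa pb pc z = pat pa pb pc (x+1)" "pat pa pb pc y = pat pa pb pc (x+2)"
    using assms(10,11) unfolding pat_def by simp_all
  then show ?thesis using interior[OF v, of Z x X Y] assms(7-9) by simp
qed

definition f1F1 :: "nat \<Rightarrow> nat \<Rightarrow> nat" where
  "f1F1 m x = (if x = 1 then 2 else if x = 2 then 0 else if x = 3*m+9 then 0
     else if x < 3*m+9 then pat 1 2 0 (x+2) else pat 1 0 2 (x - (3*m+9)))"

definition LF1 :: "nat \<Rightarrow> layers" where
  "LF1 m = [(1, f1F1 m), (6*m+12, pt 2), (3*m+7, pt 3)]"

lemma goodF1: "good (6*m+13) (LF1 m)"
  unfolding good_def
proof (intro allI impI)
  fix d assume d: "d < 6*m+13"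
  have tle: "1 \<le> 6*m+13" "6*m+12 \<le> 6*m+13" "3*m+7 \<le> 6*m+13" by simp_all
  have Z: "Zc (6*m+13) (LF1 m) d = f1F1 m d + pt 2 d + pt 3 d"
    by (simp add: Zc_def LF1_def)
  have X: "Xc (6*m+13) (LF1 m) d = f1F1 m (if 1 \<le> d then d - 1 else d + (6*m+13) - 1)
     + pt 2 (if 6*m+12 \<le> d then d - (6*m+12) else d + (6*m+13) - (6*m+12))
     + pt 3 (if 3*m+7 \<le> d then d - (3*m+7) else d + (6*m+13) - (3*m+7))"
    unfolding Xc_def LF1_def by (simp only: list.map prod.case sum_list.Cons sum_list.Nil md_sub[OF d] tle add_0_right add.assoc)
  have Y: "Yc (6*m+13) (LF1 m) d = f1F1 m (if d + 1 < 6*m+13 then d + 1 else d + 1 - (6*m+13))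
     + pt 2 (if d + (6*m+12) < 6*m+13 then d + (6*m+12) else d + (6*m+12) - (6*m+13))
     + pt 3 (if d + (3*m+7) < 6*m+13 then d + (3*m+7) else d + (3*m+7) - (6*m+13))"
    unfolding Yc_def LF1_def by (simp only: list.map prod.case sum_list.Cons sum_list.Nil md_add[OF d] tle add_0_right add.assoc)
  note defs = f1F1_def pt_def
  consider "d \<le> 3" | "4 \<le> d \<and> d \<le> 3*m+7" | "3*m+8 \<le> d \<and> d \<le> 3*m+10" | "3*m+11 \<le> d \<and> d \<le> 6*m+11" | "d = 6*m+12"
    using d by linarith
  then have "perm3 (f1F1 m d + pt 2 d + pt 3 d)
     (f1F1 m (if 1 \<le> d then d - 1 else d + (6*m+13) - 1)
     + pt 2 (if 6*m+12 \<le> d then d - (6*m+12) else d + (6*m+13) - (6*m+12))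
     + pt 3 (if 3*m+7 \<le> d then d - (3*m+7) else d + (6*m+13) - (3*m+7)))
     (f1F1 m (if d + 1 < 6*m+13 then d + 1 else d + 1 - (6*m+13))
     + pt 2 (if d + (6*m+12) < 6*m+13 then d + (6*m+12) else d + (6*m+12) - (6*m+13))
     + pt 3 (if d + (3*m+7) < 6*m+13 then d + (3*m+7) else d + (3*m+7) - (6*m+13)))"
  proof cases
    case 1
    then have "d = 0 \<or> d = 1 \<or> d = 2 \<or> d = 3" by linarith
    then show ?thesis by (elim disjE) (simp_all add: defs pat_def perm3_def)
  next
    case 2
    define k where "k = d - 4"
    have k: "d = k + 4" "k \<le> 3*m+3" using 2 unfolding k_def by linarith+
    show ?thesis unfolding k(1) by (intro interior[of 1 2 0 _ "k+5"]) (use k(2) in \<open>auto simp: defs add.commute\<close>)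
  next
    case 3
    then have "d = 3*m+8 \<or> d = 3*m+9 \<or> d = 3*m+10" by linarith
    then show ?thesis by (elim disjE) (simp_all add: defs pat_def perm3_def)
  next
    case 4
    define k where "k = d - (3*m+11)"
    have k: "d = k + (3*m+11)" "k \<le> 3*m" using 4 unfolding k_def by linarith+
    show ?thesis unfolding k(1) by (intro interior[of 1 0 2 _ "k+1"]) (use k(2) in \<open>auto simp: defs add.commute\<close>)
  next
    case 5
    then show ?thesis by (simp add: defs pat_def perm3_def)
  qed
  then show "perm3 (Zc (6*m+13) (LF1 m) d) (Xc (6*m+13) (LF1 m) d) (Yc (6*m+13) (LF1 m) d)"
    unfolding Z X Y .
qed




definition f1F5 :: "nat \<Rightarrow> nat \<Rightarrow> nat" where
  "f1F5 m x = (if x < 3 then (if x = 1 then 1 else 0) else if x = 3*m+8 then 1 else if x < 3*m+8 then pat 2 0 1 x else pat 2 1 0 (x - (3*m+8)))"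

definition LF5 :: "nat \<Rightarrow> layers" where
  "LF5 m = [(1, f1F5 m), (3*m+9, pt (0)), (6*m+16, pt (0)), (2, pt (1))]"

lemma goodF5: "good (6*m+17) (LF5 m)"
  unfolding good_def
proof (intro allI impI)
  fix d assume d: "d < 6*m+17"
  have tle: "1 \<le> 6*m+17" "3*m+9 \<le> 6*m+17" "6*m+16 \<le> 6*m+17" "2 \<le> 6*m+17" by simp_all
  have Z: "Zc (6*m+17) (LF5 m) d = f1F5 m d + pt (0) d + pt (0) d + pt (1) d"
    by (simp add: Zc_def LF5_def)
  have X: "Xc (6*m+17) (LF5 m) d = f1F5 m (if 1 \<le> d then d - (1) else d + (6*m+17) - (1)) + pt (0) (if 3*m+9 \<le> d then d - (3*m+9) else d + (6*m+17) - (3*m+9)) + pt (0) (if 6*m+16 \<le> d then d - (6*m+16) else d + (6*m+17) - (6*m+16)) + pt (1) (if 2 \<le> d then d - (2) else d + (6*m+17) - (2))"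
    unfolding Xc_def LF5_def by (simp only: list.map prod.case sum_list.Cons sum_list.Nil md_sub[OF d] tle add_0_right add.assoc)
  have Y: "Yc (6*m+17) (LF5 m) d = f1F5 m (if d + (1) < 6*m+17 then d + (1) else d + (1) - (6*m+17)) + pt (0) (if d + (3*m+9) < 6*m+17 then d + (3*m+9) else d + (3*m+9) - (6*m+17)) + pt (0) (if d + (6*m+16) < 6*m+17 then d + (6*m+16) else d + (6*m+16) - (6*m+17)) + pt (1) (if d + (2) < 6*m+17 then d + (2) else d + (2) - (6*m+17))"
    unfolding Yc_def LF5_def by (simp only: list.map prod.case sum_list.Cons sum_list.Nil md_add[OF d] tle add_0_right add.assoc)
  note defs = f1F5_def pt_def
  consider "d = 0" | "d = 1" | "d = 2" | "d = 3" | "d = 3*m+7" | "d = 3*m+8" | "d = 3*m+9" | "d = 6*m+16" | "4 \<le> d \<and> d \<le> 3*m+6" | "3*m+10 \<le> d \<and> d \<le> 6*m+15"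
    using d by linarith
  then have "perm3 (f1F5 m d + pt (0) d + pt (0) d + pt (1) d) (f1F5 m (if 1 \<le> d then d - (1) else d + (6*m+17) - (1)) + pt (0) (if 3*m+9 \<le> d then d - (3*m+9) else d + (6*m+17) - (3*m+9)) + pt (0) (if 6*m+16 \<le> d then d - (6*m+16) else d + (6*m+17) - (6*m+16)) + pt (1) (if 2 \<le> d then d - (2) else d + (6*m+17) - (2))) (f1F5 m (if d + (1) < 6*m+17 then d + (1) else d + (1) - (6*m+17)) + pt (0) (if d + (3*m+9) < 6*m+17 then d + (3*m+9) else d + (3*m+9) - (6*m+17)) + pt (0) (if d + (6*m+16) < 6*m+17 then d + (6*m+16) else d + (6*m+16) - (6*m+17)) + pt (1) (if d + (2) < 6*m+17 then d + (2) else d + (2) - (6*m+17)))"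
  proof cases
    case 1
    then show ?thesis by (simp add: defs pat_def perm3_def)
  next
    case 2
    then show ?thesis by (simp add: defs pat_def perm3_def)
  next
    case 3
    then show ?thesis by (simp add: defs pat_def perm3_def)
  next
    case 4
    then show ?thesis by (simp add: defs pat_def perm3_def)
  next
    case 5
    then show ?thesis by (simp add: defs pat_def perm3_def)
  next
    case 6
    then show ?thesis by (simp add: defs pat_def perm3_def)
  next
    case 7
    then show ?thesis by (simp add: defs pat_def perm3_def)
  next
    case 8
    then show ?thesis by (simp add: defs pat_def perm3_def)
  next
    case 9
    define k where "k = d - (4)"
    have k: "d = k + (4)" "k + (4) \<le> 3*m+6" using 9 unfolding k_def by linarith+
    show ?thesis unfolding k(1)
      apply (rule interior2[where pa=2 and pb=0 and pc=1 and z="k+4" and x="k+3" and y="k+5"])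
      apply (use k(2) in \<open>simp_all add: defs\<close>)
      apply ((unfold pat_def)?, (presburger+)?)
      done
  next
    case 10
    define k where "k = d - (3*m+10)"
    have k: "d = k + (3*m+10)" "k + (3*m+10) \<le> 6*m+15" using 10 unfolding k_def by linarith+
    show ?thesis unfolding k(1)
      apply (rule interior2[where pa=2 and pb=1 and pc=0 and z="k+2" and x="k+1" and y="k+3"])
      apply (use k(2) in \<open>simp_all add: defs\<close>)
      apply ((unfold pat_def)?, (presburger+)?)
      done
  qed
  then show "perm3 (Zc (6*m+17) (LF5 m) d) (Xc (6*m+17) (LF5 m) d) (Yc (6*m+17) (LF5 m) d)"
    unfolding Z X Y .
qed


definition f1F2 :: "nat \<Rightarrow> nat \<Rightarrow> nat" where
  "f1F2 m x = (if x < 3 then (if x = 2 then 1 else 0) else if x = 3*m+6 then 0 else if x < 3*m+7 then pat 1 0 2 x else pat 0 1 2 (x - (3*m+7)))"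

definition LF2 :: "nat \<Rightarrow> layers" where
  "LF2 m = [(1, f1F2 m), (6*m+13, pt (1)), (2, pt (1)), (3*m+7, pt (3*m+7)), (6*m+13, pt (3*m+6))]"

lemma goodF2: "good (6*m+14) (LF2 m)"
  unfolding good_def
proof (intro allI impI)
  fix d assume d: "d < 6*m+14"
  have tle: "1 \<le> 6*m+14" "6*m+13 \<le> 6*m+14" "2 \<le> 6*m+14" "3*m+7 \<le> 6*m+14" "6*m+13 \<le> 6*m+14" by simp_all
  have Z: "Zc (6*m+14) (LF2 m) d = f1F2 m d + pt (1) d + pt (1) d + pt (3*m+7) d + pt (3*m+6) d"
    by (simp add: Zc_def LF2_def)
  have X: "Xc (6*m+14) (LF2 m) d = f1F2 m (if 1 \<le> d then d - (1) else d + (6*m+14) - (1)) + pt (1) (if 6*m+13 \<le> d then d - (6*m+13) else d + (6*m+14) - (6*m+13)) + pt (1) (if 2 \<le> d then d - (2) else d + (6*m+14) - (2)) + pt (3*m+7) (if 3*m+7 \<le> d then d - (3*m+7) else d + (6*m+14) - (3*m+7)) + pt (3*m+6) (if 6*m+13 \<le> d then d - (6*m+13) else d + (6*m+14) - (6*m+13))"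
    unfolding Xc_def LF2_def by (simp only: list.map prod.case sum_list.Cons sum_list.Nil md_sub[OF d] tle add_0_right add.assoc)
  have Y: "Yc (6*m+14) (LF2 m) d = f1F2 m (if d + (1) < 6*m+14 then d + (1) else d + (1) - (6*m+14)) + pt (1) (if d + (6*m+13) < 6*m+14 then d + (6*m+13) else d + (6*m+13) - (6*m+14)) + pt (1) (if d + (2) < 6*m+14 then d + (2) else d + (2) - (6*m+14)) + pt (3*m+7) (if d + (3*m+7) < 6*m+14 then d + (3*m+7) else d + (3*m+7) - (6*m+14)) + pt (3*m+6) (if d + (6*m+13) < 6*m+14 then d + (6*m+13) else d + (6*m+13) - (6*m+14))"
    unfolding Yc_def LF2_def by (simp only: list.map prod.case sum_list.Cons sum_list.Nil md_add[OF d] tle add_0_right add.assoc)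
  note defs = f1F2_def pt_def
  consider "d = 0" | "d = 1" | "d = 2" | "d = 3" | "d = 3*m+5" | "d = 3*m+6" | "d = 3*m+7" | "d = 6*m+13" | "4 \<le> d \<and> d \<le> 3*m+4" | "3*m+8 \<le> d \<and> d \<le> 6*m+12"
    using d by linarith
  then have "perm3 (f1F2 m d + pt (1) d + pt (1) d + pt (3*m+7) d + pt (3*m+6) d) (f1F2 m (if 1 \<le> d then d - (1) else d + (6*m+14) - (1)) + pt (1) (if 6*m+13 \<le> d then d - (6*m+13) else d + (6*m+14) - (6*m+13)) + pt (1) (if 2 \<le> d then d - (2) else d + (6*m+14) - (2)) + pt (3*m+7) (if 3*m+7 \<le> d then d - (3*m+7) else d + (6*m+14) - (3*m+7)) + pt (3*m+6) (if 6*m+13 \<le> d then d - (6*m+13) else d + (6*m+14) - (6*m+13))) (f1F2 m (if d + (1) < 6*m+14 then d + (1) else d + (1) - (6*m+14)) + pt (1) (if d + (6*m+13) < 6*m+14 then d + (6*m+13) else d + (6*m+13) - (6*m+14)) + pt (1) (if d + (2) < 6*m+14 then d + (2) else d + (2) - (6*m+14)) + pt (3*m+7) (if d + (3*m+7) < 6*m+14 then d + (3*m+7) else d + (3*m+7) - (6*m+14)) + pt (3*m+6) (if d + (6*m+13) < 6*m+14 then d + (6*m+13) else d + (6*m+13) - (6*m+14)))"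
  proof cases
    case 1
    then show ?thesis by (simp add: defs pat_def perm3_def)
  next
    case 2
    then show ?thesis by (simp add: defs pat_def perm3_def)
  next
    case 3
    then show ?thesis by (simp add: defs pat_def perm3_def)
  next
    case 4
    then show ?thesis by (simp add: defs pat_def perm3_def)
  next
    case 5
    then show ?thesis by (simp add: defs pat_def perm3_def)
  next
    case 6
    then show ?thesis by (simp add: defs pat_def perm3_def)
  next
    case 7
    then show ?thesis by (simp add: defs pat_def perm3_def)
  next
    case 8
    then show ?thesis by (simp add: defs pat_def perm3_def)
  next
    case 9
    define k where "k = d - (4)"
    have k: "d = k + (4)" "k + (4) \<le> 3*m+4" using 9 unfolding k_def by linarith+
    show ?thesis unfolding k(1)
      apply (rule interior2[where pa=1 and pb=0 and pc=2 and z="k+4" and x="k+3" and y="k+5"])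
      apply (use k(2) in \<open>simp_all add: defs\<close>)
      apply ((unfold pat_def)?, (presburger+)?)
      done
  next
    case 10
    define k where "k = d - (3*m+8)"
    have k: "d = k + (3*m+8)" "k + (3*m+8) \<le> 6*m+12" using 10 unfolding k_def by linarith+
    show ?thesis unfolding k(1)
      apply (rule interior2[where pa=0 and pb=1 and pc=2 and z="k+1" and x="k" and y="k+2"])
      apply (use k(2) in \<open>simp_all add: defs\<close>)
      apply ((unfold pat_def)?, (presburger+)?)
      done
  qed
  then show "perm3 (Zc (6*m+14) (LF2 m) d) (Xc (6*m+14) (LF2 m) d) (Yc (6*m+14) (LF2 m) d)"
    unfolding Z X Y .
qed


definition f1F4 :: "nat \<Rightarrow> nat \<Rightarrow> nat" where
  "f1F4 m x = (if x = 3*m+8 then 0 else if x < 3*m+8 then pat 0 1 2 x else pat 1 0 2 (x - (3*m+8)))"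

definition LF4 :: "nat \<Rightarrow> layers" where
  "LF4 m = [(1, f1F4 m), (3*m+8, pt (0)), (3*m+9, pt (0)), (3*m+8, pt (3*m+7))]"

lemma goodF4: "good (6*m+16) (LF4 m)"
  unfolding good_def
proof (intro allI impI)
  fix d assume d: "d < 6*m+16"
  have tle: "1 \<le> 6*m+16" "3*m+8 \<le> 6*m+16" "3*m+9 \<le> 6*m+16" "3*m+8 \<le> 6*m+16" by simp_all
  have Z: "Zc (6*m+16) (LF4 m) d = f1F4 m d + pt (0) d + pt (0) d + pt (3*m+7) d"
    by (simp add: Zc_def LF4_def)
  have X: "Xc (6*m+16) (LF4 m) d = f1F4 m (if 1 \<le> d then d - (1) else d + (6*m+16) - (1)) + pt (0) (if 3*m+8 \<le> d then d - (3*m+8) else d + (6*m+16) - (3*m+8)) + pt (0) (if 3*m+9 \<le> d then d - (3*m+9) else d + (6*m+16) - (3*m+9)) + pt (3*m+7) (if 3*m+8 \<le> d then d - (3*m+8) else d + (6*m+16) - (3*m+8))"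
    unfolding Xc_def LF4_def by (simp only: list.map prod.case sum_list.Cons sum_list.Nil md_sub[OF d] tle add_0_right add.assoc)
  have Y: "Yc (6*m+16) (LF4 m) d = f1F4 m (if d + (1) < 6*m+16 then d + (1) else d + (1) - (6*m+16)) + pt (0) (if d + (3*m+8) < 6*m+16 then d + (3*m+8) else d + (3*m+8) - (6*m+16)) + pt (0) (if d + (3*m+9) < 6*m+16 then d + (3*m+9) else d + (3*m+9) - (6*m+16)) + pt (3*m+7) (if d + (3*m+8) < 6*m+16 then d + (3*m+8) else d + (3*m+8) - (6*m+16))"
    unfolding Yc_def LF4_def by (simp only: list.map prod.case sum_list.Cons sum_list.Nil md_add[OF d] tle add_0_right add.assoc)
  note defs = f1F4_def pt_def
  consider "d = 0" | "d = 3*m+7" | "d = 3*m+8" | "d = 3*m+9" | "d = 6*m+15" | "1 \<le> d \<and> d \<le> 3*m+6" | "3*m+10 \<le> d \<and> d \<le> 6*m+14"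
    using d by linarith
  then have "perm3 (f1F4 m d + pt (0) d + pt (0) d + pt (3*m+7) d) (f1F4 m (if 1 \<le> d then d - (1) else d + (6*m+16) - (1)) + pt (0) (if 3*m+8 \<le> d then d - (3*m+8) else d + (6*m+16) - (3*m+8)) + pt (0) (if 3*m+9 \<le> d then d - (3*m+9) else d + (6*m+16) - (3*m+9)) + pt (3*m+7) (if 3*m+8 \<le> d then d - (3*m+8) else d + (6*m+16) - (3*m+8))) (f1F4 m (if d + (1) < 6*m+16 then d + (1) else d + (1) - (6*m+16)) + pt (0) (if d + (3*m+8) < 6*m+16 then d + (3*m+8) else d + (3*m+8) - (6*m+16)) + pt (0) (if d + (3*m+9) < 6*m+16 then d + (3*m+9) else d + (3*m+9) - (6*m+16)) + pt (3*m+7) (if d + (3*m+8) < 6*m+16 then d + (3*m+8) else d + (3*m+8) - (6*m+16)))"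
  proof cases
    case 1
    then show ?thesis by (simp add: defs pat_def perm3_def)
  next
    case 2
    then show ?thesis by (simp add: defs pat_def perm3_def)
  next
    case 3
    then show ?thesis by (simp add: defs pat_def perm3_def)
  next
    case 4
    then show ?thesis by (simp add: defs pat_def perm3_def)
  next
    case 5
    then show ?thesis by (simp add: defs pat_def perm3_def)
  next
    case 6
    define k where "k = d - (1)"
    have k: "d = k + (1)" "k + (1) \<le> 3*m+6" using 6 unfolding k_def by linarith+
    show ?thesis unfolding k(1)
      apply (rule interior2[where pa=0 and pb=1 and pc=2 and z="k+1" and x="k" and y="k+2"])
      apply (use k(2) in \<open>simp_all add: defs\<close>)
      apply ((unfold pat_def)?, (presburger+)?)
      done
  next
    case 7
    define k where "k = d - (3*m+10)"
    have k: "d = k + (3*m+10)" "k + (3*m+10) \<le> 6*m+14" using 7 unfolding k_def by linarith+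
    show ?thesis unfolding k(1)
      apply (rule interior2[where pa=1 and pb=0 and pc=2 and z="k+2" and x="k+1" and y="k+3"])
      apply (use k(2) in \<open>simp_all add: defs\<close>)
      apply ((unfold pat_def)?, (presburger+)?)
      done
  qed
  then show "perm3 (Zc (6*m+16) (LF4 m) d) (Xc (6*m+16) (LF4 m) d) (Yc (6*m+16) (LF4 m) d)"
    unfolding Z X Y .
qed




definition toks :: "(nat \<times> nat) list \<Rightarrow> layers" where
  "toks xs = map (\<lambda>(t,s). (t, pt s)) xs"

lemma all_less_upt: "(\<forall>d<n. P d) \<longleftrightarrow> list_all P [0..<n]"
  by (auto simp: list_all_iff)

lemma good_exec: "good n L \<longleftrightarrow> list_all (\<lambda>d. perm3 (Zc n L d) (Xc n L d) (Yc n L d)) [0..<n]"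
  unfolding good_def all_less_upt ..

lemma good_small4: "good 4 (toks [(1,1),(2,0),(3,0),(2,1)])"
  unfolding good_exec by (simp add: toks_def Zc_def Xc_def Yc_def md_def pt_def perm3_def upt_rec)

lemma good_small5: "good 5 (toks [(1,1),(1,3),(3,0),(4,0),(2,1)])"
  unfolding good_exec by (simp add: toks_def Zc_def Xc_def Yc_def md_def pt_def perm3_def upt_rec)

lemma good_small7: "good 7 (toks [(1,1),(1,1),(1,4),(1,5),(1,5),(6,2),(4,3)])"
  unfolding good_exec by (simp add: toks_def Zc_def Xc_def Yc_def md_def pt_def perm3_def upt_rec)

lemma good_small8: "good 8 (toks [(1,0),(1,1),(1,3),(1,6),(2,0),(2,1),(7,4),(7,5)])"
  unfolding good_exec by (simp add: toks_def Zc_def Xc_def Yc_def md_def pt_def perm3_def upt_rec)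

lemma good_small10: "good 10 (toks [(1,1),(1,2),(1,2),(1,4),(1,7),(1,7),(1,8),(5,0),(6,0),(5,4)])"
  unfolding good_exec by (simp add: toks_def Zc_def Xc_def Yc_def md_def pt_def perm3_def upt_rec)

lemma good_small11: "good 11 (toks [(1,1),(1,3),(1,3),(1,5),(1,6),(1,8),(1,8),(1,9),(6,0),(10,0),(2,1)])"
  unfolding good_exec by (simp add: toks_def Zc_def Xc_def Yc_def md_def pt_def perm3_def upt_rec)



definition C2 :: "nat \<Rightarrow> nat \<Rightarrow> nat \<Rightarrow> nat" where
  "C2 i j k = (if (i,j,k) = (1,1,1) then 6 else if (i,j,k) = (1,1,2) then 4
     else if (i,j,k) = (1,2,1) then 3 else if (i,j,k) = (1,2,2) then 1
     else if (i,j,k) = (2,1,2) then 7 else if (i,j,k) = (2,2,2) then 1 else 0)"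

lemma mset_eq_sortI: "sort xs = sort ys \<Longrightarrow> mset xs = mset ys"
  by (metis mset_sort)

lemma cube2: "line_sums 2 C2 = mset_set {0..<3*2^2}"
proof -
  have A: "{1..2::nat} \<times> {1..2::nat} = set [(1,1),(1,2),(2,1),(2,2)]" by auto
  have I: "{1..2::nat} = {1,2}" by auto
  have M: "mset_set ({1..2::nat} \<times> {1..2::nat}) = mset [(1,1),(1,2),(2,1),(2,2)]"
    unfolding A by (rule mset_set_set) simp
  have R: "mset_set {0..<3*2^2} = mset [0..<12::nat]" by (simp add: mset_upt)
  show ?thesis
    unfolding line_sums_def M R
    apply (simp only: mset_map[symmetric] mset_append[symmetric])
    apply (rule mset_eq_sortI)
    apply (simp only: list.map prod.case append.simps I)
    apply (simp add: C2_def)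
    apply code_simp
    done
qed


lemma good_exists:
  fixes n :: nat
  assumes "3 \<le> n"
  shows "\<exists>L. good n L"
proof -
  have cases: "n mod 3 = 0 \<or> n mod 6 = 1 \<or> n mod 6 = 5 \<or> n mod 6 = 2 \<or> n mod 6 = 4" by presburger
  show ?thesis
  proof (cases "n mod 3 = 0")
    case True
    then have "n = 3 * (n div 3 - 1) + 3" using assms by presburger
    then show ?thesis using good0[of "n div 3 - 1"] by metis
  next
    case F3: False
    show ?thesis
    proof (cases "n \<le> 11")
      case True
      then have "n = 4 \<or> n = 5 \<or> n = 7 \<or> n = 8 \<or> n = 10 \<or> n = 11" using assms F3 by presburger
      then show ?thesis using good_small4 good_small5 good_small7 good_small8 good_small10 good_small11 by blast
    next
      case False
      then have big: "12 \<le> n" by simp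
      consider "n mod 6 = 1" | "n mod 6 = 5" | "n mod 6 = 2" | "n mod 6 = 4" using cases F3 by blast
      then show ?thesis
      proof cases
        case 1
        then have "n = 6 * ((n - 13) div 6) + 13" using big by presburger
        then show ?thesis using goodF1[of "(n - 13) div 6"] by metis
      next
        case 2
        then have "n = 6 * ((n - 17) div 6) + 17" using big by presburger
        then show ?thesis using goodF5[of "(n - 17) div 6"] by metis
      next
        case 3
        then have "n = 6 * ((n - 14) div 6) + 14" using big by presburger
        then show ?thesis using goodF2[of "(n - 14) div 6"] by metis
      next
        case 4
        then have "n = 6 * ((n - 16) div 6) + 16" using big by presburger
        then show ?thesis using goodF4[of "(n - 16) div 6"] by metis
      qed
    qed
  qed
qed

theorem theorem4p1:
  fixes n :: nat
  assumes "n \<ge> 2"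
  shows "\<exists>C. sarvate_beam_cube n C"
proof (cases "n = 2")
  case True
  then show ?thesis using cube2 unfolding sarvate_beam_cube_def by blast
next
  case False
  then have "3 \<le> n" using assms by simp
  then obtain L where "good n L" using good_exists by blast
  then have "line_sums n (Cube n L) = mset_set {0..<3*n^2}"
    using \<open>3 \<le> n\<close> by (intro good_cube) simp_all
  then show ?thesis unfolding sarvate_beam_cube_def by blast
qed

end
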